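(* Let $(X,d)$ be a complete metric space with (metric) uniform normal structure and property (P) for nets. Let $\mathcal S$ be a semigroup whose preorder $\le$ is total, and suppose the action $(\mathcal S,X)$ is strong-orbit $k$-Lipschitzian with $k<\tilde N(X)^{-1/2}$. If some orbit is bounded, then there is $z\in X$ such that $sz=z$ for all $s\in\mathcal S$.
   Context: A semigroup action is a map $\mathcal S\times X\to X$, $(s,x)\mapsto sx$, with $(st)x=s(tx)$. $\mathcal S^1$ is $\mathcal S$ with an identity adjoined. The preorder on $\mathcal S$: $s\le t$ iff $t\in\mathcal S^1s=\{s\}\cup\mathcal S s$; it is total if for all $s,t$, $s\le t$ or $t\le s$. The orbit of $x$ is $o(x)=\{x\}\cup\{sx:s\in\mathcal S\}$; $D(x,C)=\sup\{d(x,y):y\in C\}$. The action is strong-orbit $k$-Lipschitzian if $D(sx,o(sy))\le k\,D(x,o(y))$ for all $s\in\mathcal S$, $x,y\in X$. A set is admissible if it is a nonempty intersection of closed balls; ${\rm cov}(C)$ is the intersection of all closed balls containing $C$. $r(A)=\inf_{x\in A}D(x,A)$, $\delta(A)=\sup\{d(x,y):x,y\in A\}$; $\tilde N(X)=\sup\{r(A)/\delta(A)\}$ over admissible $A$ with $\delta(A)>0$, and $X$ has (metric) uniform normal structure if $\tilde N(X)<1$. Property (P) for nets: for any directed preordered index set and any two bounded nets $\{x_s\}$, $\{z_s\}$ in $X$ with $z_s\in{\rm cov}(\{x_j:j\ge s\})$, there is $z\in\bigcap_s{\rm cov}(\{z_j:j\ge s\})$ with $\limsup_s d(z,x_s)\le\limsup_t\limsup_s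 d(z_t,x_s)$. *)

theory Defs
  imports "HOL-Analysis.Analysis"
begin

definition is_action :: "('b::semigroup_mult \<Rightarrow> 'a \<Rightarrow> 'a) \<Rightarrow> bool" where
  "is_action act \<longleftrightarrow> (\<forall>s t x. act (s * t) x = act s (act t x))"

definition sg_le :: "'b::semigroup_mult \<Rightarrow> 'b \<Rightarrow> bool" where
  "sg_le s t \<longleftrightarrow> t = s \<or> (\<exists>u. t = u * s)"

definition sg_le_total :: "'b::semigroup_mult itself \<Rightarrow> bool" where
  "sg_le_total _ \<longleftrightarrow> (\<forall>s t::'b. sg_le s t \<or> sg_le t s)"

definition orbit :: "('b \<Rightarrow> 'a \<Rightarrow> 'a) \<Rightarrow> 'a \<Rightarrow> 'a set" where
  "orbit act x = insert x (range (\<lambda>s. act s x))"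

definition Dsup :: "'a::metric_space \<Rightarrow> 'a set \<Rightarrow> ereal" where
  "Dsup x C = (SUP y\<in>C. ereal (dist x y))"

definition strong_orbit_lipschitz ::
  "('b \<Rightarrow> 'a::metric_space \<Rightarrow> 'a) \<Rightarrow> real \<Rightarrow> bool" where
  "strong_orbit_lipschitz act k \<longleftrightarrow>
     (\<forall>s x y. Dsup (act s x) (orbit act (act s y)) \<le> ereal k * Dsup x (orbit act y))"

definition admissible :: "'a::metric_space set \<Rightarrow> bool" where
  "admissible A \<longleftrightarrow> A \<noteq> {} \<and>
     (\<exists>F. F \<noteq> {} \<and> (\<forall>B\<in>F. \<exists>x r. B = cball x r) \<and> A = \<Inter>F)"

definition cov :: "'a::metric_space set \<Rightarrow> 'a set" where
  "cov C = \<Inter>{cball x r | x r. C \<subseteq> cball x r}"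

definition cheb_radius :: "'a::metric_space set \<Rightarrow> ereal" where
  "cheb_radius A = (INF x\<in>A. Dsup x A)"

definition diam_e :: "'a::metric_space set \<Rightarrow> ereal" where
  "diam_e A = (SUP x\<in>A. SUP y\<in>A. ereal (dist x y))"

definition Ntilde_set :: "'a::metric_space itself \<Rightarrow> real set" where
  "Ntilde_set _ = {real_of_ereal (cheb_radius A) / real_of_ereal (diam_e A) | A::'a set.
                     admissible A \<and> diam_e A > 0}"

definition Ntilde :: "'a::metric_space itself \<Rightarrow> real" where
  "Ntilde T = (if Ntilde_set T = {} then 0 else Sup (Ntilde_set T))"

definition uniform_normal_structure :: "'a::metric_space itself \<Rightarrow> bool" where
  "uniform_normal_structure T \<longleftrightarrow> Ntilde T < 1"

definition directed_preorder_on :: "'i set \<Rightarrow> ('i \<Rightarrow> 'i \<Rightarrow> bool) \<Rightarrow> bool" where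
  "directed_preorder_on I le \<longleftrightarrow> I \<noteq> {} \<and>
     (\<forall>i\<in>I. le i i) \<and>
     (\<forall>i\<in>I. \<forall>j\<in>I. \<forall>k\<in>I. le i j \<longrightarrow> le j k \<longrightarrow> le i k) \<and>
     (\<forall>i\<in>I. \<forall>j\<in>I. \<exists>k\<in>I. le i k \<and> le j k)"

definition tail :: "'i set \<Rightarrow> ('i \<Rightarrow> 'i \<Rightarrow> bool) \<Rightarrow> 'i \<Rightarrow> 'i set" where
  "tail I le s = {j\<in>I. le s j}"

definition net_limsup :: "'i set \<Rightarrow> ('i \<Rightarrow> 'i \<Rightarrow> bool) \<Rightarrow> ('i \<Rightarrow> real) \<Rightarrow> ereal" where
  "net_limsup I le f = (INF s\<in>I. SUP j\<in>tail I le s. ereal (f j))"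

definition property_P :: "'i itself \<Rightarrow> 'a::metric_space itself \<Rightarrow> bool" where
  "property_P _ _ \<longleftrightarrow>
    (\<forall>(I::'i set) le (x::'i \<Rightarrow> 'a) (z::'i \<Rightarrow> 'a).
       directed_preorder_on I le \<and> bounded (x ` I) \<and> bounded (z ` I) \<and>
       (\<forall>s\<in>I. z s \<in> cov (x ` tail I le s)) \<longrightarrow>
       (\<exists>w. (\<forall>s\<in>I. w \<in> cov (z ` tail I le s)) \<and>
            net_limsup I le (\<lambda>s. dist w (x s))
              \<le> net_limsup I le (\<lambda>t. real_of_ereal (net_limsup I le (\<lambda>s. dist (z t) (x s))))))"

end

theory Submission
  imports Defs
begin

lemma geom_cauchy:
  fixes z :: "nat \<Rightarrow> 'a::metric_space"
  assumes c: "0 \<le> c" "c < 1" and B: "0 \<le> B"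
    and d: "\<And>n. dist (z n) (z (Suc n)) \<le> B * c ^ n"
  shows "Cauchy z"
proof -
  have s: "dist (z m) (z (m + j)) \<le> B * (\<Sum>i<j. c ^ (m + i))" for m j
  proof (induction j)
    case 0 then show ?case by simp
  next
    case (Suc j)
    have "dist (z m) (z (m + Suc j)) \<le> dist (z m) (z (m + j)) + dist (z (m + j)) (z (Suc (m + j)))"
      by (simp add: dist_triangle)
    also have "\<dots> \<le> B * (\<Sum>i<j. c ^ (m + i)) + B * c ^ (m + j)"
      using Suc d[of "m+j"] by linarith
    finally show ?case by (simp add: distrib_left)
  qed
  have sb: "(\<Sum>i<j. c ^ (m + i)) \<le> c ^ m / (1 - c)" for m j
  proof -
    have "(\<Sum>i<j. c ^ (m + i)) = c ^ m * (\<Sum>i<j. c ^ i)"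
      by (simp add: power_add sum_distrib_left)
    also have "(\<Sum>i<j. c ^ i) = (1 - c ^ j) / (1 - c)"
      using sum_gp_strict[of c j] c by simp
    also have "c ^ m * ((1 - c ^ j) / (1 - c)) \<le> c ^ m * (1 / (1 - c))"
      using c by (intro mult_left_mono divide_right_mono) auto
    finally show ?thesis by simp
  qed
  have bnd: "dist (z m) (z n) \<le> B * c ^ min m n / (1 - c)" for m n
  proof (cases "m \<le> n")
    case True
    then obtain j where "n = m + j" using le_Suc_ex by blast
    then show ?thesis using s[of m j] sb[of m j] B True
      by (smt (verit, best) min_def mult_left_mono times_divide_eq_right)
  next
    case False
    then obtain j where "m = n + j" using le_Suc_ex nat_le_linear by blast
    then show ?thesis using s[of n j] sb[of n j] B False
      by (smt (verit, best) dist_commute min_def mult_left_mono times_divide_eq_right)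
  qed
  have lim: "(\<lambda>n. B * c ^ n / (1 - c)) \<longlonglongrightarrow> 0"
    using c by (auto intro!: tendsto_eq_intros LIMSEQ_power_zero)
  show ?thesis
  proof (rule metric_CauchyI)
    fix e :: real assume "e > 0"
    then obtain N where N: "\<And>n. n \<ge> N \<Longrightarrow> \<bar>B * c ^ n / (1 - c)\<bar> < e"
      using lim unfolding LIMSEQ_iff by (metis real_norm_def diff_zero)
    have "dist (z m) (z n) < e" if "m \<ge> N" "n \<ge> N" for m n
    proof -
      have "B * c ^ min m n / (1 - c) < e"
        using N[of "min m n"] that abs_ge_self[of "B * c ^ min m n / (1 - c)"] by linarith
      then show ?thesis using bnd[of m n] by linarith
    qed
    then show "\<exists>M. \<forall>m\<ge>M. \<forall>n\<ge>M. dist (z m) (z n) < e" by blast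
  qed
qed

lemma cov_sub: "C \<subseteq> cov C"
  unfolding cov_def by blast

lemma cov_ball: "C \<subseteq> cball a r \<Longrightarrow> cov C \<subseteq> cball a r"
  unfolding cov_def by blast

lemma cov_mono: "C \<subseteq> C' \<Longrightarrow> cov C \<subseteq> cov C'"
  unfolding cov_def by blast

lemma cov_idem: "cov (cov C) \<subseteq> cov C"
  unfolding cov_def by blast

lemma cov_diam:
  assumes "\<forall>a\<in>C. \<forall>b\<in>C. dist a b \<le> \<delta>"
  shows "\<forall>a\<in>cov C. \<forall>b\<in>cov C. dist a b \<le> \<delta>"
proof (intro ballI)
  fix a b assume a: "a \<in> cov C" and b: "b \<in> cov C"
  have "C \<subseteq> cball a \<delta>"
  proof
    fix c assume c: "c \<in> C"
    have "C \<subseteq> cball c \<delta>" using assms c by auto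
    then have "a \<in> cball c \<delta>" using cov_ball a by blast
    then show "c \<in> cball a \<delta>" by (simp add: dist_commute)
  qed
  then have "cov C \<subseteq> cball a \<delta>" by (rule cov_ball)
  then show "dist a b \<le> \<delta>" using b by auto
qed

lemma Dsup_ge0: "x \<in> A \<Longrightarrow> 0 \<le> Dsup x A"
proof -
  assume "x \<in> A"
  then have "ereal (dist x x) \<le> (SUP y\<in>A. ereal (dist x y))" by (rule SUP_upper)
  then show ?thesis unfolding Dsup_def by (simp add: zero_ereal_def)
qed

lemma cheb_le_diam: "A \<noteq> {} \<Longrightarrow> 0 \<le> cheb_radius A \<and> cheb_radius A \<le> diam_e A"
proof -
  assume "A \<noteq> {}"
  then obtain a where a: "a \<in> A" by blast
  have "cheb_radius A \<le> Dsup a A" unfolding cheb_radius_def using a by (rule INF_lower)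
  also have "Dsup a A \<le> diam_e A" unfolding Dsup_def diam_e_def using a by (rule SUP_upper)
  finally have 1: "cheb_radius A \<le> diam_e A" .
  have "0 \<le> cheb_radius A" unfolding cheb_radius_def
    by (rule INF_greatest) (rule Dsup_ge0)
  with 1 show ?thesis by blast
qed

lemma Ntilde_bdd: "bdd_above (Ntilde_set TYPE('a::metric_space))"
proof -
  have "q \<le> 1" if "q \<in> Ntilde_set TYPE('a)" for q
  proof -
    from that obtain A :: "'a set" where q: "q = real_of_ereal (cheb_radius A) / real_of_ereal (diam_e A)"
      and ad: "admissible A" "diam_e A > 0" unfolding Ntilde_set_def by blast
    have ne: "A \<noteq> {}" using ad unfolding admissible_def by blast
    from cheb_le_diam[OF ne] have h: "0 \<le> cheb_radius A" "cheb_radius A \<le> diam_e A" by auto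
    show ?thesis
    proof (cases "diam_e A = \<infinity>")
      case True then show ?thesis using q by simp
    next
      case False
      then obtain d where d: "diam_e A = ereal d" using ad(2) by (cases "diam_e A") auto
      have "d > 0" using ad(2) d by simp
      obtain r where r: "cheb_radius A = ereal r" "0 \<le> r" "r \<le> d" using h d
        by (cases "cheb_radius A") auto
      then show ?thesis using q d \<open>d>0\<close> by simp
    qed
  qed
  then show ?thesis unfolding bdd_above_def by blast
qed

lemma cheb_center:
  fixes C :: "'a::metric_space set"
  assumes ne: "C \<noteq> {}" and bd: "bounded C" and dm: "\<forall>a\<in>C. \<forall>b\<in>C. dist a b \<le> \<delta>"
    and N': "Ntilde TYPE('a) < N'" "0 < N'"
  shows "\<exists>z\<in>cov C. \<forall>a\<in>cov C. dist z a \<le> N' * \<delta>"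
proof -
  define A where "A = cov C"
  from ne obtain c where c: "c \<in> C" by blast
  have cA: "c \<in> A" unfolding A_def using c cov_sub by blast
  have "dist c c \<le> \<delta>" using dm c by blast
  then have dge: "0 \<le> \<delta>" by simp
  have dA: "\<forall>a\<in>A. \<forall>b\<in>A. dist a b \<le> \<delta>" using cov_diam[OF dm] A_def by simp
  have diamle: "diam_e A \<le> ereal \<delta>" unfolding diam_e_def
    using dA by (intro SUP_least) auto
  show ?thesis
  proof (cases "diam_e A > 0")
    case False
    then have "diam_e A \<le> 0" by simp
    have cz: "\<forall>a\<in>A. dist c a \<le> 0"
    proof
      fix a assume "a \<in> A"
      then have "ereal (dist c a) \<le> (SUP y\<in>A. ereal (dist c y))" by (rule SUP_upper)
      also have "\<dots> \<le> diam_e A" unfolding diam_e_def using cA by (rule SUP_upper)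
      also have "\<dots> \<le> 0" by fact
      finally show "dist c a \<le> 0" by (simp add: zero_ereal_def)
    qed
    have "0 \<le> N' * \<delta>" using dge N' by simp
    then have "\<forall>a\<in>A. dist c a \<le> N' * \<delta>" using cz by force
    then show ?thesis using cA unfolding A_def by blast
  next
    case True
    define d where "d = real_of_ereal (diam_e A)"
    have "\<bar>diam_e A\<bar> \<noteq> \<infinity>" using True diamle by auto
    then have d: "diam_e A = ereal d" unfolding d_def by (simp add: ereal_real)
    have d0: "0 < d" "d \<le> \<delta>" using True diamle d by auto
    have adm: "admissible A"
    proof -
      obtain x0 e where "C \<subseteq> cball x0 e" using bd bounded_subset_cball by blast
      then have F1: "{cball x r | x r. C \<subseteq> cball x r} \<noteq> {}" by blast
      have F2: "A = \<Inter>{cball x r | x r. C \<subseteq> cball x r}" unfolding A_def cov_def ..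
      have F3: "\<forall>B\<in>{cball x r | x r. C \<subseteq> cball x r}. \<exists>x r. B = cball x r" by blast
      have F0: "A \<noteq> {}" using cA by blast
      show ?thesis unfolding admissible_def
        using F0 F1 F2 F3 by (intro conjI exI[of _ "{cball x r | x r. C \<subseteq> cball x r}"])
    qed
    have hh: "0 \<le> cheb_radius A" "cheb_radius A \<le> diam_e A" using cheb_le_diam[of A] cA by auto
    define r where "r = real_of_ereal (cheb_radius A)"
    have "\<bar>cheb_radius A\<bar> \<noteq> \<infinity>" using hh d by auto
    then have r: "cheb_radius A = ereal r" unfolding r_def by (simp add: ereal_real)
    have mem: "r / d \<in> Ntilde_set TYPE('a)" unfolding Ntilde_set_def
      apply (rule CollectI, rule exI[of _ A])
      using adm True r d by simp
    then have "r / d \<le> Ntilde TYPE('a)" unfolding Ntilde_def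
      using cSup_upper[OF mem Ntilde_bdd] by auto
    then have "r \<le> Ntilde TYPE('a) * d" using d0 by (simp add: divide_le_eq)
    also have "\<dots> < N' * d" using d0 N' by simp
    finally have "cheb_radius A < ereal (N' * d)" using r by simp
    then obtain z where z: "z \<in> A" "Dsup z A < ereal (N' * d)"
      unfolding cheb_radius_def by (auto simp: INF_less_iff)
    have "\<forall>a\<in>A. dist z a \<le> N' * \<delta>"
    proof
      fix a assume "a \<in> A"
      then have "ereal (dist z a) \<le> Dsup z A" unfolding Dsup_def by (rule SUP_upper)
      then have "ereal (dist z a) < ereal (N' * d)" using z(2) by (rule order_le_less_trans)
      then have "dist z a \<le> N' * d" by simp
      also have "\<dots> \<le> N' * \<delta>" using d0 N' by simp
      finally show "dist z a \<le> N' * \<delta>" .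
    qed
    then show ?thesis using z A_def by blast
  qed
qed

lemma act_mult: "is_action act \<Longrightarrow> act (s * t) x = act s (act t x)"
  unfolding is_action_def by blast

lemma tail_img:
  assumes "is_action act"
  shows "(\<lambda>j. act j x) ` tail UNIV sg_le t = orbit act (act t x)"
proof
  show "(\<lambda>j. act j x) ` tail UNIV sg_le t \<subseteq> orbit act (act t x)"
    unfolding tail_def sg_le_def orbit_def using act_mult[OF assms] by auto
  show "orbit act (act t x) \<subseteq> (\<lambda>j. act j x) ` tail UNIV sg_le t"
  proof
    fix p assume "p \<in> orbit act (act t x)"
    then consider "p = act t x" | u where "p = act u (act t x)" unfolding orbit_def by blast
    then show "p \<in> (\<lambda>j. act j x) ` tail UNIV sg_le t"
    proof cases
      case 1 then show ?thesis unfolding tail_def sg_le_def by blast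
    next
      case 2
      then have "p = act (u * t) x" using act_mult[OF assms] by simp
      moreover have "u * t \<in> tail UNIV sg_le t" unfolding tail_def sg_le_def by blast
      ultimately show ?thesis by blast
    qed
  qed
qed

lemma orbit_sub:
  assumes "is_action act" shows "orbit act (act t x) \<subseteq> orbit act x"
  unfolding orbit_def using act_mult[OF assms, symmetric] by auto

lemma in_orbit: "x \<in> orbit act x" "act s x \<in> orbit act x"
  unfolding orbit_def by auto

lemma lip:
  assumes lip: "strong_orbit_lipschitz act k" and kk: "k \<le> kk" "0 \<le> kk"
    and M: "\<forall>p\<in>orbit act y. dist x p \<le> M"
  shows "\<forall>q\<in>orbit act (act s y). dist (act s x) q \<le> kk * M"
proof
  fix q assume q: "q \<in> orbit act (act s y)"
  have "ereal (dist x y) \<le> Dsup x (orbit act y)" unfolding Dsup_def by (rule SUP_upper, rule in_orbit(1))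
  then have D0: "0 \<le> Dsup x (orbit act y)" using order_trans zero_le_dist by (metis ereal_less_eq(5))
  have DM: "Dsup x (orbit act y) \<le> ereal M" unfolding Dsup_def using M by (intro SUP_least) simp
  have "ereal (dist (act s x) q) \<le> Dsup (act s x) (orbit act (act s y))"
    unfolding Dsup_def using q by (rule SUP_upper)
  also have "\<dots> \<le> ereal k * Dsup x (orbit act y)" using lip unfolding strong_orbit_lipschitz_def by blast
  also have "\<dots> \<le> ereal kk * Dsup x (orbit act y)"
    using D0 kk by (intro ereal_mult_right_mono) simp_all
  also have "\<dots> \<le> ereal kk * ereal M"
    using DM kk by (intro ereal_mult_left_mono) simp_all
  finally show "dist (act s x) q \<le> kk * M" by simp
qed

lemma dir: "sg_le_total TYPE('b::semigroup_mult) \<Longrightarrow> directed_preorder_on (UNIV::'b set) sg_le"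
  unfolding directed_preorder_on_def sg_le_total_def
proof (intro conjI ballI impI)
  fix i :: 'b show "sg_le i i" unfolding sg_le_def by simp
next
  fix i j k :: 'b assume "sg_le i j" "sg_le j k"
  then show "sg_le i k" unfolding sg_le_def by (metis mult.assoc)
next
  fix i j :: 'b assume "\<forall>s t::'b. sg_le s t \<or> sg_le t s"
  then show "\<exists>k\<in>UNIV. sg_le i k \<and> sg_le j k" unfolding sg_le_def by blast
qed simp

lemma orbit_diam:
  assumes act: "is_action act" and tot: "sg_le_total TYPE('b::semigroup_mult)"
    and lp: "strong_orbit_lipschitz act k" and kk: "k \<le> kk" "0 \<le> kk"
    and D: "\<forall>p\<in>orbit act x. dist x p \<le> D"
  shows "\<forall>p\<in>orbit act (act (t::'b) x). \<forall>q\<in>orbit act (act t x). dist p q \<le> kk * D"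
proof (intro ballI)
  fix p q assume "p \<in> orbit act (act t x)" "q \<in> orbit act (act t x)"
  then obtain j j' where p: "p = act j x" and q: "q = act j' x"
    unfolding tail_img[OF act, symmetric] by auto
  have key: "dist (act i x) (act i' x) \<le> kk * D" if "sg_le i i'" for i i'
  proof -
    have "act i' x \<in> orbit act (act i x)"
      unfolding tail_img[OF act, symmetric] tail_def using that by auto
    then show ?thesis using lip[OF lp kk D, of i] by blast
  qed
  from tot have "sg_le j j' \<or> sg_le j' j" unfolding sg_le_total_def by blast
  then show "dist p q \<le> kk * D" using key[of j j'] key[of j' j] p q by (auto simp: dist_commute)
qed

lemma sg_le_trans:
  assumes "sg_le (i::'b::semigroup_mult) j" "sg_le j k" shows "sg_le i k"
proof -
  from assms(1) consider "j = i" | u where "j = u * i" unfolding sg_le_def by blast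
  then show ?thesis
  proof cases
    case 1 then show ?thesis using assms(2) by simp
  next
    case (2 u)
    from assms(2) consider "k = j" | v where "k = v * j" unfolding sg_le_def by blast
    then show ?thesis
    proof cases
      case 1 then show ?thesis using 2 unfolding sg_le_def by blast
    next
      case (2 v)
      then have "k = (v * u) * i" using \<open>j = u * i\<close> by (simp add: mult.assoc)
      then show ?thesis unfolding sg_le_def by blast
    qed
  qed
qed

lemma step:
  fixes act :: "'b::semigroup_mult \<Rightarrow> 'a::metric_space \<Rightarrow> 'a"
  assumes act: "is_action act" and P: "property_P TYPE('b) TYPE('a)"
    and tot: "sg_le_total TYPE('b)"
    and lp: "strong_orbit_lipschitz act k" and kk: "k \<le> kk" "0 \<le> kk"
    and N': "Ntilde TYPE('a) < N'" "0 < N'"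
    and D: "\<forall>p\<in>orbit act x. dist x p \<le> D"
  shows "\<exists>y. (\<forall>p\<in>orbit act y. dist y p \<le> kk * (N' * kk * D)) \<and> dist x y \<le> D + N' * kk * D"
proof -
  define M where "M = N' * kk * D"
  define xs where "xs = (\<lambda>j. act j x)"
  define T where "T = tail (UNIV::'b set) sg_le"
  have tl: "xs ` T t = orbit act (act t x)" for t unfolding xs_def T_def by (rule tail_img[OF act])
  have "dist x x \<le> D" using D in_orbit(1)[of x act] by blast
  then have D0: "0 \<le> D" by simp
  have ob: "orbit act (act t x) \<subseteq> cball x D" for t
    using orbit_sub[OF act, of t x] D by (auto simp: subset_eq)
  have dm: "\<forall>p\<in>orbit act (act t x). \<forall>q\<in>orbit act (act t x). dist p q \<le> kk * D" for t
    by (rule orbit_diam[OF act tot lp kk D])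
  have "\<forall>t. \<exists>z. z \<in> cov (orbit act (act t x)) \<and> (\<forall>a\<in>cov (orbit act (act t x)). dist z a \<le> N' * (kk * D))"
  proof
    fix t
    have "orbit act (act t x) \<noteq> {}" using in_orbit(1)[of "act t x" act] by blast
    moreover have "bounded (orbit act (act t x))" by (rule bounded_subset[OF bounded_cball ob])
    ultimately show "\<exists>z. z \<in> cov (orbit act (act t x)) \<and> (\<forall>a\<in>cov (orbit act (act t x)). dist z a \<le> N' * (kk * D))"
      using cheb_center[OF _ _ dm N'] by blast
  qed
  from choice[OF this] obtain zf where zf: "\<And>t. zf t \<in> cov (orbit act (act t x))"
     "\<And>t. \<forall>a\<in>cov (orbit act (act t x)). dist (zf t) a \<le> N' * (kk * D)" by blast
  have cb: "cov (orbit act (act t x)) \<subseteq> cball x D" for t by (rule cov_ball[OF ob])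
  have bx: "bounded (xs ` UNIV)"
  proof (rule bounded_subset[OF bounded_cball])
    show "xs ` UNIV \<subseteq> cball x D"
    proof (rule image_subsetI)
      fix j show "xs j \<in> cball x D" unfolding xs_def mem_cball using D in_orbit(2)[of act j x] by blast
    qed
  qed
  have bz: "bounded (zf ` UNIV)"
    by (rule bounded_subset[OF bounded_cball]) (use zf(1) cb in blast)
  have zin: "\<forall>s\<in>UNIV. zf s \<in> cov (xs ` tail UNIV sg_le s)" using zf(1) tl unfolding T_def by simp
  have pre: "directed_preorder_on (UNIV::'b set) sg_le \<and> bounded (xs ` UNIV) \<and> bounded (zf ` UNIV) \<and>
      (\<forall>s\<in>UNIV. zf s \<in> cov (xs ` tail UNIV sg_le s))"
    using dir[OF tot] bx bz zin by blast
  from P[unfolded property_P_def, rule_format, OF pre] obtain w where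
    w1: "\<forall>s\<in>UNIV. w \<in> cov (zf ` tail UNIV sg_le s)" and
    w2: "net_limsup UNIV sg_le (\<lambda>s. dist w (xs s)) \<le>
      net_limsup UNIV sg_le (\<lambda>t. real_of_ereal (net_limsup UNIV sg_le (\<lambda>s. dist (zf t) (xs s))))"
    by blast
  have Tsub: "T t \<subseteq> T s" if "sg_le s t" for s t
    unfolding T_def tail_def using sg_le_trans that by blast
  have wcov: "w \<in> cov (orbit act (act s x))" for s
  proof -
    have "zf ` T s \<subseteq> cov (orbit act (act s x))"
    proof
      fix p assume "p \<in> zf ` T s"
      then obtain t where t: "t \<in> T s" "p = zf t" by blast
      have "sg_le s t" using t(1) unfolding T_def tail_def by simp
      then have "xs ` T t \<subseteq> xs ` T s" using Tsub by (intro image_mono)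
      then have "orbit act (act t x) \<subseteq> orbit act (act s x)" using tl by simp
      then show "p \<in> cov (orbit act (act s x))" using zf(1)[of t] cov_mono t by blast
    qed
    then have "cov (zf ` T s) \<subseteq> cov (orbit act (act s x))"
      using cov_mono cov_idem by blast
    then show ?thesis using w1 unfolding T_def by blast
  qed
  have sT: "s \<in> T s" for s unfolding T_def tail_def sg_le_def by simp
  have inner: "0 \<le> net_limsup UNIV sg_le (\<lambda>s. dist (zf t) (xs s)) \<and>
     net_limsup UNIV sg_le (\<lambda>s. dist (zf t) (xs s)) \<le> ereal M" for t
  proof
    show "0 \<le> net_limsup UNIV sg_le (\<lambda>s. dist (zf t) (xs s))"
      unfolding net_limsup_def
    proof (rule INF_greatest)
      fix s :: 'b
      have "ereal (dist (zf t) (xs s)) \<le> (SUP j\<in>tail UNIV sg_le s. ereal (dist (zf t) (xs j)))"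
        by (rule SUP_upper) (use sT in \<open>simp add: T_def\<close>)
      then show "0 \<le> (SUP j\<in>tail UNIV sg_le s. ereal (dist (zf t) (xs j)))"
        by (rule order_trans[rotated]) simp
    qed
    have "net_limsup UNIV sg_le (\<lambda>s. dist (zf t) (xs s)) \<le> (SUP j\<in>tail UNIV sg_le t. ereal (dist (zf t) (xs j)))"
      unfolding net_limsup_def by (rule INF_lower) simp
    also have "\<dots> \<le> ereal M"
    proof (rule SUP_least)
      fix j assume "j \<in> tail UNIV sg_le t"
      then have "xs j \<in> orbit act (act t x)" using tl[of t] unfolding T_def by blast
      then have "xs j \<in> cov (orbit act (act t x))" using cov_sub by blast
      then show "ereal (dist (zf t) (xs j)) \<le> ereal M" using zf(2)[of t] unfolding M_def
        by (simp add: mult.assoc)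
    qed
    finally show "net_limsup UNIV sg_le (\<lambda>s. dist (zf t) (xs s)) \<le> ereal M" .
  qed
  have inner2: "real_of_ereal (net_limsup UNIV sg_le (\<lambda>s. dist (zf t) (xs s))) \<le> M" for t
  proof -
    have "real_of_ereal (net_limsup UNIV sg_le (\<lambda>s. dist (zf t) (xs s))) \<le> real_of_ereal (ereal M)"
      by (rule real_of_ereal_positive_mono) (use inner[of t] in auto)
    then show ?thesis by simp
  qed
  have "net_limsup UNIV sg_le (\<lambda>t. real_of_ereal (net_limsup UNIV sg_le (\<lambda>s. dist (zf t) (xs s)))) \<le> ereal M"
  proof -
    fix s0 :: 'b
    have "net_limsup UNIV sg_le (\<lambda>t. real_of_ereal (net_limsup UNIV sg_le (\<lambda>s. dist (zf t) (xs s))))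
       \<le> (SUP j\<in>tail UNIV sg_le s0. ereal (real_of_ereal (net_limsup UNIV sg_le (\<lambda>s. dist (zf j) (xs s)))))"
      unfolding net_limsup_def by (rule INF_lower) simp
    also have "\<dots> \<le> ereal M" by (rule SUP_least) (use inner2 in simp)
    finally show ?thesis .
  qed
  with w2 have L: "net_limsup UNIV sg_le (\<lambda>s. dist w (xs s)) \<le> ereal M" by (rule order_trans)
  have near: "\<exists>u. \<forall>p\<in>orbit act (act u x). dist w p \<le> M + e" if e: "e > 0" for e
  proof -
    have "net_limsup UNIV sg_le (\<lambda>s. dist w (xs s)) < ereal (M + e)"
    proof -
      have "ereal M < ereal (M + e)" using e by simp
      with L show ?thesis by (rule order_le_less_trans)
    qed
    then obtain u where u: "(SUP j\<in>tail UNIV sg_le u. ereal (dist w (xs j))) < ereal (M + e)"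
      unfolding net_limsup_def by (auto simp: INF_less_iff)
    have "\<forall>p\<in>orbit act (act u x). dist w p \<le> M + e"
    proof
      fix p assume "p \<in> orbit act (act u x)"
      then obtain j where j: "j \<in> tail UNIV sg_le u" "p = xs j" using tl[of u] unfolding T_def by blast
      have "ereal (dist w (xs j)) \<le> (SUP j\<in>tail UNIV sg_le u. ereal (dist w (xs j)))"
        using j(1) by (rule SUP_upper)
      then have "ereal (dist w (xs j)) < ereal (M + e)" using u by (rule order_le_less_trans)
      then show "dist w p \<le> M + e" using j by simp
    qed
    then show ?thesis by blast
  qed
  have a: "dist w (act s w) \<le> kk * M" for s
  proof (rule field_le_epsilon)
    fix e :: real assume e: "0 < e"
    define e' where "e' = e / (kk + 1)"
    have e': "0 < e'" "kk * e' \<le> e" using e kk unfolding e'_def by (auto simp: field_simps)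
    obtain u where u: "\<forall>p\<in>orbit act (act u x). dist w p \<le> M + e'" using near[OF e'(1)] by blast
    have "\<forall>q\<in>orbit act (act s (act u x)). dist (act s w) q \<le> kk * (M + e')"
      by (rule lip[OF lp kk u])
    then have "orbit act (act (s * u) x) \<subseteq> cball (act s w) (kk * (M + e'))"
      using act_mult[OF act] by (auto simp: subset_eq)
    then have "w \<in> cball (act s w) (kk * (M + e'))" using cov_ball wcov by blast
    then have "dist w (act s w) \<le> kk * (M + e')" by (simp add: dist_commute)
    also have "\<dots> \<le> kk * M + e" using e' by (simp add: distrib_left)
    finally show "dist w (act s w) \<le> kk * M + e" .
  qed
  have b: "dist x w \<le> D + M"
  proof (rule field_le_epsilon)
    fix e :: real assume e: "0 < e"
    obtain u where u: "\<forall>p\<in>orbit act (act u x). dist w p \<le> M + e" using near[OF e] by blast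
    have "dist x w \<le> dist x (act u x) + dist (act u x) w" by (rule dist_triangle)
    also have "\<dots> \<le> D + (M + e)"
    proof -
      have "dist x (act u x) \<le> D" using D in_orbit(2)[of act u x] by blast
      moreover have "dist w (act u x) \<le> M + e" using u in_orbit(1)[of "act u x" act] by blast
      ultimately show ?thesis by (simp add: dist_commute)
    qed
    finally show "dist x w \<le> D + M + e" by simp
  qed
  have "\<forall>p\<in>orbit act w. dist w p \<le> kk * M"
  proof
    fix p assume "p \<in> orbit act w"
    then consider "p = w" | s where "p = act s w" unfolding orbit_def by blast
    then show "dist w p \<le> kk * M"
    proof cases
      case 1 then show ?thesis using kk N' D0 unfolding M_def by simp
    next
      case 2 then show ?thesis using a by simp
    qed
  qed
  then show ?thesis using b unfolding M_def by blast
qed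

theorem theorem5p4:
  fixes act :: "'b::semigroup_mult \<Rightarrow> 'a::complete_space \<Rightarrow> 'a"
    and k :: real
  assumes "is_action act"
    and "uniform_normal_structure TYPE('a)"
    and "property_P TYPE('b) TYPE('a)"
    and "sg_le_total TYPE('b)"
    and "strong_orbit_lipschitz act k"
    and "Ntilde TYPE('a) = 0 \<or> k < Ntilde TYPE('a) powr (-1/2)"
    and "\<exists>x. bounded (orbit act x)"
  shows "\<exists>z. \<forall>s. act s z = z"
proof -
  define kk where "kk = max k 0"
  have kk: "k \<le> kk" "0 \<le> kk" unfolding kk_def by auto
  define N where "N = Ntilde TYPE('a)"
  obtain N' where N': "N < N'" "0 < N'" "N' * kk^2 < 1"
  proof (cases "N > 0")
    case True
    then have "k < N powr (-1/2)" using assms(6) N_def by auto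
    moreover have "N powr (-1/2) = 1 / sqrt N"
      using True by (simp add: powr_minus_divide powr_half_sqrt)
    moreover have "0 < 1 / sqrt N" using True by simp
    ultimately have "kk < 1 / sqrt N" unfolding kk_def by auto
    then have "kk * sqrt N < 1" using True by (simp add: field_simps)
    then have "(kk * sqrt N)^2 < 1^2" using kk True by (intro power_strict_mono) auto
    then have a: "kk^2 * N < 1" using True by (simp add: power_mult_distrib)
    define cc where "cc = 1 - kk^2 * N"
    have cc: "0 < cc" using a cc_def by simp
    define N2 where "N2 = N + cc / (2 * (kk^2 + 1))"
    have p: "0 < 2 * (kk^2 + 1)" using zero_le_power2[of kk] by (smt (verit))
    have "0 < cc / (2 * (kk^2 + 1))" using cc p by (rule divide_pos_pos)
    then have n1: "N < N2" "0 < N2" using True N2_def by auto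
    have "kk^2 * (cc / (2 * (kk^2 + 1))) < cc"
    proof -
      have "kk^2 < 2 * (kk^2 + 1)" using zero_le_power2[of kk] by (smt (verit))
      then have "kk^2 / (2 * (kk^2 + 1)) < 1" using p by simp
      then have "kk^2 / (2 * (kk^2 + 1)) * cc < 1 * cc" using cc by (intro mult_strict_right_mono) auto
      then show ?thesis by simp
    qed
    then have "N2 * kk^2 < 1" unfolding N2_def cc_def by (simp add: algebra_simps)
    then show ?thesis using that n1 by blast
  next
    case False
    define N2 where "N2 = 1 / (kk^2 + 1)"
    have p: "0 < kk^2 + 1" using zero_le_power2[of kk] by (smt (verit))
    then have "0 < N2" unfolding N2_def by simp
    then have "N < N2" "0 < N2" using False by auto
    moreover have "N2 * kk^2 < 1" unfolding N2_def using p by simp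
    ultimately show ?thesis using that by blast
  qed
  define c where "c = kk * (N' * kk)"
  have c: "0 \<le> c" "c < 1" using N' kk unfolding c_def by (auto simp: power2_eq_square mult_ac)
  from assms(7) obtain x0 where "bounded (orbit act x0)" by blast
  then obtain D0 where D0: "\<forall>p\<in>orbit act x0. dist x0 p \<le> D0" using bounded_any_center by blast
  have "dist x0 x0 \<le> D0" using D0 in_orbit(1)[of x0 act] by blast
  then have D00: "0 \<le> D0" by simp
  define Q where "Q = (\<lambda>x D y. (\<forall>p\<in>orbit act y. dist y p \<le> kk * (N' * kk * D)) \<and> dist x y \<le> D + N' * kk * D)"
  define F where "F = (\<lambda>x D. SOME y. Q x D y)"
  have F: "Q x D (F x D)" if "\<forall>p\<in>orbit act x. dist x p \<le> D" for x D
  proof -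
    have "\<exists>y. Q x D y" unfolding Q_def
      by (rule step[OF assms(1) assms(3) assms(4) assms(5) kk _ N'(2) that]) (use N' N_def in simp)
    then show ?thesis unfolding F_def by (rule someI_ex)
  qed
  define seq where "seq = rec_nat x0 (\<lambda>n y. F y (c^n * D0))"
  have seq0: "seq 0 = x0" and seqS: "seq (Suc n) = F (seq n) (c^n * D0)" for n
    unfolding seq_def by simp_all
  have inv: "\<forall>p\<in>orbit act (seq n). dist (seq n) p \<le> c^n * D0" for n
  proof (induction n)
    case 0 then show ?case using D0 seq0 by simp
  next
    case (Suc n)
    from F[OF Suc] have "\<forall>p\<in>orbit act (seq (Suc n)). dist (seq (Suc n)) p \<le> kk * (N' * kk * (c^n * D0))"
      unfolding Q_def seqS by blast
    moreover have "kk * (N' * kk * (c^n * D0)) = c ^ Suc n * D0" unfolding c_def by (simp add: mult_ac)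
    ultimately show ?case by simp
  qed
  have dst: "dist (seq n) (seq (Suc n)) \<le> ((1 + N' * kk) * D0) * c^n" for n
  proof -
    from F[OF inv[of n]] have "dist (seq n) (seq (Suc n)) \<le> c^n * D0 + N' * kk * (c^n * D0)"
      unfolding Q_def seqS by blast
    also have "\<dots> = ((1 + N' * kk) * D0) * c^n" by (simp add: algebra_simps)
    finally show ?thesis .
  qed
  have "Cauchy seq"
    by (rule geom_cauchy[OF c _ dst]) (use N' kk D00 in simp)
  then have "convergent seq" by (rule Cauchy_convergent)
  then obtain z where lim: "seq \<longlonglongrightarrow> z" unfolding convergent_def by blast
  have "act s z = z" for s
  proof -
    have bound: "dist (act s z) z \<le> kk * (dist z (seq n) + c^n * D0) + c^n * D0 + dist (seq n) z" for n
    proof -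
      have M: "\<forall>p\<in>orbit act (seq n). dist z p \<le> dist z (seq n) + c^n * D0"
      proof
        fix p assume "p \<in> orbit act (seq n)"
        then have "dist (seq n) p \<le> c^n * D0" using inv by blast
        moreover have "dist z p \<le> dist z (seq n) + dist (seq n) p" by (rule dist_triangle)
        ultimately show "dist z p \<le> dist z (seq n) + c^n * D0" by simp
      qed
      have 1: "dist (act s z) (act s (seq n)) \<le> kk * (dist z (seq n) + c^n * D0)"
        using lip[OF assms(5) kk M, of s] in_orbit(1)[of "act s (seq n)" act] by blast
      have "dist (seq n) (act s (seq n)) \<le> c^n * D0"
        using inv[of n] in_orbit(2)[of act s "seq n"] by blast
      then have 2: "dist (act s (seq n)) (seq n) \<le> c^n * D0" by (simp add: dist_commute)
      have "dist (act s z) z \<le> dist (act s z) (act s (seq n)) + dist (act s (seq n)) z" by (rule dist_triangle)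
      also have "dist (act s (seq n)) z \<le> dist (act s (seq n)) (seq n) + dist (seq n) z" by (rule dist_triangle)
      finally show ?thesis using 1 2 by simp
    qed
    have d1: "(\<lambda>n. dist z (seq n)) \<longlonglongrightarrow> 0" using tendsto_dist[OF tendsto_const[of z] lim] by simp
    have d2: "(\<lambda>n. dist (seq n) z) \<longlonglongrightarrow> 0" using tendsto_dist[OF lim tendsto_const[of z]] by simp
    have cp: "(\<lambda>n. c^n) \<longlonglongrightarrow> 0" using c by (intro LIMSEQ_power_zero) simp
    have "(\<lambda>n. kk * (dist z (seq n) + c^n * D0) + c^n * D0 + dist (seq n) z) \<longlonglongrightarrow> kk * (0 + 0 * D0) + 0 * D0 + 0"
      by (intro tendsto_intros d1 d2 cp)
    then have t: "(\<lambda>n. kk * (dist z (seq n) + c^n * D0) + c^n * D0 + dist (seq n) z) \<longlonglongrightarrow> 0" by simp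
    have "dist (act s z) z \<le> 0" by (rule LIMSEQ_le_const[OF t]) (use bound in blast)
    then show ?thesis by simp
  qed
  then show ?thesis by blast
qed

end
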